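(* Let $E\in M_n(\mathbb{FT})$ be an idempotent of rank $n$, and let $H_E$ be its $\mathcal{H}$-class in $M_n(\mathbb{FT})$. Let $G_E$ be the set of all units $G$ of the monoid $M_n(\mathbb{T})$ which commute with $E$ (i.e. $G\otimes E=E\otimes G$). Then the map $G_E\to H_E$, $G\mapsto G\otimes E=E\otimes G$ is an isomorphism of groups.
   Context: $\mathbb{FT}$ is $\mathbb{R}$ with $a\oplus b=\max(a,b)$, $a\otimes b=a+b$; $\mathbb{T}=\mathbb{R}\cup\{-\infty\}$ with $a\oplus-\infty=a$ and $a\otimes-\infty=-\infty$. $M_n(\mathbb{FT})\subseteq M_n(\mathbb{T})$ are the sets of $n\times n$ matrices over these, under $(A\otimes B)_{i,j}=\bigoplus_k A_{i,k}\otimes B_{k,j}$; $M_n(\mathbb{T})$ is a monoid whose identity has $0$ on the diagonal and $-\infty$ elsewhere, and its units are exactly the matrices with exactly one entry different from $-\infty$ in each row and column. $C(E)$ is the subset of $\mathbb{FT}^n$ of all finite maxima of columns of $E$ shifted by real constants. The rank of an idempotent $E$ is the minimal cardinality of a generating set of $C(E)$ (as a set closed under componentwise max and adding a real constant to all coordinates). Green's relations on a semigroup $S$: $a\,\mathcal{R}\,b$ iff $aS^1=bS^1$, $a\,\mathcal{L}\,b$ iff $S^1a=S^1b$, $\mathcal{H}=\mathcal{L}\cap\mathcal{R}$; the $\mathcal H$-class of an idempotent is a group. *)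

theory Defs
  imports "HOL-Algebra.Group" "HOL-Library.Extended_Real"
begin

text \<open>Tropical n x n matrices, n = CARD('n), entries in ereal.
  T = reals with -infinity; FT = reals. Max plays the role of oplus, + of otimes.\<close>

type_synonym 'n tmat = "'n \<Rightarrow> 'n \<Rightarrow> ereal"

definition tmult :: "('n::finite) tmat \<Rightarrow> 'n tmat \<Rightarrow> 'n tmat" where
  "tmult A B = (\<lambda>i j. Max (range (\<lambda>k. A i k + B k j)))"

definition tid :: "('n::finite) tmat" where
  "tid = (\<lambda>i j. if i = j then 0 else -\<infinity>)"

definition is_T :: "('n::finite) tmat \<Rightarrow> bool" where
  "is_T A \<longleftrightarrow> (\<forall>i j. A i j \<noteq> \<infinity>)"

definition is_FT :: "('n::finite) tmat \<Rightarrow> bool" where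
  "is_FT A \<longleftrightarrow> (\<forall>i j. \<exists>r::real. A i j = ereal r)"

definition is_unit_T :: "('n::finite) tmat \<Rightarrow> bool" where
  "is_unit_T A \<longleftrightarrow> is_T A \<and> (\<exists>B. is_T B \<and> tmult A B = tid \<and> tmult B A = tid)"

definition tspan :: "(('n::finite) \<Rightarrow> real) set \<Rightarrow> ('n \<Rightarrow> real) set" where
  "tspan X = {x. \<exists>S c. S \<subseteq> X \<and> finite S \<and> S \<noteq> {} \<and>
                  x = (\<lambda>i. Max ((\<lambda>v. c v + v i) ` S))}"

definition colspace :: "('n::finite) tmat \<Rightarrow> ('n \<Rightarrow> real) set" where
  "colspace E = tspan ((\<lambda>k. (\<lambda>i. real_of_ereal (E i k))) ` UNIV)"

definition trank :: "('n::finite) tmat \<Rightarrow> nat" where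
  "trank E = (LEAST m. \<exists>X. X \<subseteq> colspace E \<and> finite X \<and> tspan X = colspace E \<and> card X = m)"

text \<open>Green's relations in the semigroup S = M_n(FT) (ideals taken in S^1).\<close>
definition right_ideal_FT :: "('n::finite) tmat \<Rightarrow> 'n tmat set" where
  "right_ideal_FT A = insert A {tmult A X | X. is_FT X}"

definition left_ideal_FT :: "('n::finite) tmat \<Rightarrow> 'n tmat set" where
  "left_ideal_FT A = insert A {tmult X A | X. is_FT X}"

definition H_FT :: "('n::finite) tmat \<Rightarrow> 'n tmat \<Rightarrow> bool" where
  "H_FT A B \<longleftrightarrow> right_ideal_FT A = right_ideal_FT B \<and> left_ideal_FT A = left_ideal_FT B"

definition H_class_FT :: "('n::finite) tmat \<Rightarrow> 'n tmat set" where
  "H_class_FT E = {A. is_FT A \<and> H_FT A E}"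

definition G_of :: "('n::finite) tmat \<Rightarrow> 'n tmat set" where
  "G_of E = {G. is_unit_T G \<and> tmult G E = tmult E G}"

definition G_group :: "('n::finite) tmat \<Rightarrow> 'n tmat monoid" where
  "G_group E = \<lparr>carrier = G_of E, mult = tmult, one = tid\<rparr>"

definition H_group :: "('n::finite) tmat \<Rightarrow> 'n tmat monoid" where
  "H_group E = \<lparr>carrier = H_class_FT E, mult = tmult, one = E\<rparr>"

end

theory Submission
  imports Defs
begin


lemma Max_range_ge: "f k \<le> Max (range (f::'n::finite \<Rightarrow> 'a::linorder))"
  by (rule Max_ge) auto

lemma Max_range_in: "\<exists>k. Max (range (f::'n::finite \<Rightarrow> 'a::linorder)) = f k"
proof -
  have "Max (range f) \<in> range f" by (rule Max_in) auto
  then show ?thesis by (metis rangeE)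
qed

lemma Max_range_le: "(\<And>k. f k \<le> c) \<Longrightarrow> Max (range (f::'n::finite \<Rightarrow> 'a::linorder)) \<le> c"
  by (simp add: Max_le_iff)

lemma Max_single:
  fixes f :: "'n::finite \<Rightarrow> ereal"
  assumes "\<And>m. m \<noteq> m0 \<Longrightarrow> f m = -\<infinity>"
  shows "Max (range f) = f m0"
  apply (rule Max_eqI) using assms apply auto
  subgoal for x by (cases "x = m0") auto
  done

lemma Max_Max_range:
  fixes g :: "'n::finite \<Rightarrow> 'm::finite \<Rightarrow> 'a::linorder"
  shows "Max (range (\<lambda>k. Max (range (\<lambda>l. g k l)))) = Max (range (\<lambda>(k,l). g k l))"
proof (rule order_antisym)
  show "Max (range (\<lambda>k. Max (range (\<lambda>l. g k l)))) \<le> Max (range (\<lambda>(k,l). g k l))"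
  proof (rule Max_range_le)
    fix k show "Max (range (\<lambda>l. g k l)) \<le> Max (range (\<lambda>(k,l). g k l))"
    proof (rule Max_range_le)
      fix l show "g k l \<le> Max (range (\<lambda>(k,l). g k l))"
        using Max_range_ge[of "\<lambda>(k,l). g k l" "(k,l)"] by simp
    qed
  qed
  show "Max (range (\<lambda>(k,l). g k l)) \<le> Max (range (\<lambda>k. Max (range (\<lambda>l. g k l))))"
  proof (rule Max_range_le)
    fix p :: "'n \<times> 'm"
    obtain k l where p: "p = (k,l)" by fastforce
    have "g k l \<le> Max (range (\<lambda>l. g k l))" by (rule Max_range_ge)
    also have "\<dots> \<le> Max (range (\<lambda>k. Max (range (\<lambda>l. g k l))))"
      by (rule Max_range_ge[of "\<lambda>k. Max (range (\<lambda>l. g k l))"])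
    finally show "(\<lambda>(k,l). g k l) p \<le> Max (range (\<lambda>k. Max (range (\<lambda>l. g k l))))"
      using p by simp
  qed
qed

lemma tmult_assoc: "tmult (tmult A B) C = tmult A (tmult B C)" for A B C :: "('n::finite) tmat"
proof (intro ext)
  fix i j
  have e1: "\<And>k. Max (range (\<lambda>l. A i l + B l k)) + C k j = Max (range (\<lambda>l. A i l + B l k + C k j))"
  proof -
    fix k
    have "mono (\<lambda>x::ereal. x + C k j)" by (simp add: add_right_mono monoI)
    from mono_Max_commute[OF this, of "range (\<lambda>l. A i l + B l k)"]
    show "Max (range (\<lambda>l. A i l + B l k)) + C k j = Max (range (\<lambda>l. A i l + B l k + C k j))"
      by (simp add: image_image)
  qed
  have e2: "\<And>l. A i l + Max (range (\<lambda>k. B l k + C k j)) = Max (range (\<lambda>k. A i l + (B l k + C k j)))"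
  proof -
    fix l
    have "mono (\<lambda>x::ereal. A i l + x)" by (simp add: add_left_mono monoI)
    from mono_Max_commute[OF this, of "range (\<lambda>k. B l k + C k j)"]
    show "A i l + Max (range (\<lambda>k. B l k + C k j)) = Max (range (\<lambda>k. A i l + (B l k + C k j)))"
      by (simp add: image_image)
  qed
  have "tmult (tmult A B) C i j = Max (range (\<lambda>k. Max (range (\<lambda>l. A i l + B l k + C k j))))"
    unfolding tmult_def using e1 by simp
  also have "\<dots> = Max (range (\<lambda>(k,l). A i l + B l k + C k j))" by (rule Max_Max_range)
  also have "\<dots> = Max (range (\<lambda>(l,k). A i l + (B l k + C k j)))"
    by (rule arg_cong[where f=Max]) (auto simp: add.assoc image_iff)
  also have "\<dots> = Max (range (\<lambda>l. Max (range (\<lambda>k. A i l + (B l k + C k j)))))"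
    by (rule Max_Max_range[symmetric])
  also have "\<dots> = tmult A (tmult B C) i j"
    unfolding tmult_def using e2 by simp
  finally show "tmult (tmult A B) C i j = tmult A (tmult B C) i j" .
qed




definition rv :: "('n::finite) tmat \<Rightarrow> 'n \<Rightarrow> 'n \<Rightarrow> real" where
  "rv A i j = real_of_ereal (A i j)"

lemma FT_eq: "is_FT A \<Longrightarrow> A i j = ereal (rv A i j)"
  unfolding is_FT_def rv_def by (metis real_of_ereal.simps(1))

lemma FT_T: "is_FT A \<Longrightarrow> is_T A"
  unfolding is_T_def is_FT_def by (metis PInfty_neq_ereal(1))

lemma FT_mult_aux:
  assumes "is_FT A" "is_FT B"
  shows "tmult A B i j = ereal (Max (range (\<lambda>k. rv A i k + rv B k j)))"
proof -
  have "\<And>k. A i k + B k j = ereal (rv A i k + rv B k j)"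
    using FT_eq[OF assms(1)] FT_eq[OF assms(2)] by (metis plus_ereal.simps(1))
  then have "(\<lambda>k. A i k + B k j) = (\<lambda>k. ereal (rv A i k + rv B k j))" by (rule ext)
  then have "tmult A B i j = Max (range (\<lambda>k. ereal (rv A i k + rv B k j)))"
    unfolding tmult_def by metis
  also have "\<dots> = ereal (Max (range (\<lambda>k. rv A i k + rv B k j)))"
    using mono_Max_commute[of ereal "range (\<lambda>k. rv A i k + rv B k j)"]
    by (simp add: monoI image_image)
  finally show ?thesis .
qed

lemma FT_mult: "is_FT A \<Longrightarrow> is_FT B \<Longrightarrow> is_FT (tmult A B)"
  unfolding is_FT_def[of "tmult A B"] using FT_mult_aux by blast

lemma rv_mult: "is_FT A \<Longrightarrow> is_FT B \<Longrightarrow> rv (tmult A B) i j = Max (range (\<lambda>k. rv A i k + rv B k j))"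
  using FT_mult_aux[of A B i j] by (simp add: rv_def[of "tmult A B"])

lemma mult_real_le: "is_FT A \<Longrightarrow> is_FT B \<Longrightarrow> rv A i k + rv B k j \<le> rv (tmult A B) i j"
  by (simp add: rv_mult Max_range_ge)

lemma mult_real_ex: "is_FT A \<Longrightarrow> is_FT B \<Longrightarrow> \<exists>k. rv (tmult A B) i j = rv A i k + rv B k j"
  by (simp add: rv_mult Max_range_in)

lemma ereal_add_ne_inf: "(a::ereal) \<noteq> \<infinity> \<Longrightarrow> b \<noteq> \<infinity> \<Longrightarrow> a + b \<noteq> \<infinity>"
  by (cases a; cases b) auto

lemma T_mult: "is_T A \<Longrightarrow> is_T B \<Longrightarrow> is_T (tmult A B)"
  unfolding is_T_def
proof (intro allI)
  fix i j assume a: "\<forall>i j. A i j \<noteq> \<infinity>" "\<forall>i j. B i j \<noteq> \<infinity>"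
  obtain k where "tmult A B i j = A i k + B k j"
    using Max_range_in[of "\<lambda>k. A i k + B k j"] unfolding tmult_def by blast
  moreover have "A i k + B k j \<noteq> \<infinity>" using a ereal_add_ne_inf by blast
  ultimately show "tmult A B i j \<noteq> \<infinity>" by simp
qed

lemma minf_add: "(x::ereal) \<noteq> \<infinity> \<Longrightarrow> -\<infinity> + x = -\<infinity>"
  by (cases x) auto

lemma add_minf: "(x::ereal) \<noteq> \<infinity> \<Longrightarrow> x + -\<infinity> = -\<infinity>"
  by (cases x) auto

lemma tid_left: "is_T A \<Longrightarrow> tmult tid A = A"
  unfolding tmult_def
proof (intro ext)
  fix i j assume a: "is_T A"
  have "Max (range (\<lambda>k. tid i k + A k j)) = tid i i + A i j"
  proof (rule Max_single)
    fix m assume "m \<noteq> i"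
    then show "tid i m + A m j = -\<infinity>" using a minf_add unfolding is_T_def tid_def by auto
  qed
  then show "Max (range (\<lambda>k. tid i k + A k j)) = A i j" by (simp add: tid_def)
qed

lemma tid_right: "is_T A \<Longrightarrow> tmult A tid = A"
  unfolding tmult_def
proof (intro ext)
  fix i j assume a: "is_T A"
  have "Max (range (\<lambda>k. A i k + tid k j)) = A i j + tid j j"
  proof (rule Max_single)
    fix m assume "m \<noteq> j"
    then show "A i m + tid m j = -\<infinity>" using a add_minf unfolding is_T_def tid_def by auto
  qed
  then show "Max (range (\<lambda>k. A i k + tid k j)) = A i j" by (simp add: tid_def)
qed

lemma is_T_tid: "is_T tid" unfolding is_T_def tid_def by simp

lemma ereal_fin: "x \<noteq> \<infinity> \<Longrightarrow> ereal r \<le> x \<Longrightarrow> x = ereal (real_of_ereal x)"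
  by (cases x) auto

lemma unit_FT_left:
  assumes "is_T G" "is_T B" "tmult G B = tid" "is_FT E"
  shows "is_FT (tmult G E)"
  unfolding is_FT_def
proof (intro allI)
  fix i j
  have "tmult G B i i = 0" using assms(3) by (simp add: tid_def)
  then have "Max (range (\<lambda>k. G i k + B k i)) = 0" unfolding tmult_def .
  moreover obtain k where "Max (range (\<lambda>k. G i k + B k i)) = G i k + B k i"
    using Max_range_in by blast
  ultimately have s0: "G i k + B k i = 0" by simp
  have nb: "B k i \<noteq> \<infinity>" and ng: "G i k \<noteq> \<infinity>" using assms(1,2) unfolding is_T_def by auto
  have "G i k \<noteq> -\<infinity>"
  proof
    assume "G i k = -\<infinity>"
    then have "G i k + B k i = -\<infinity>" using minf_add[OF nb] by simp
    then show False using s0 by simp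
  qed
  then obtain g where g: "G i k = ereal g" using ng by (cases "G i k") auto
  have "G i k + E k j \<le> tmult G E i j" unfolding tmult_def by (rule Max_range_ge)
  moreover have "G i k + E k j = ereal (g + rv E k j)" using g FT_eq[OF assms(4), of k j] by simp
  ultimately have le: "ereal (g + rv E k j) \<le> tmult G E i j" by simp
  moreover have "tmult G E i j \<noteq> \<infinity>" using T_mult[OF assms(1) FT_T[OF assms(4)]] unfolding is_T_def by auto
  ultimately show "\<exists>r. tmult G E i j = ereal r" using ereal_fin by blast
qed




lemma tspan_shift:
  assumes "x \<in> tspan X" shows "(\<lambda>i. r + x i) \<in> tspan X"
proof -
  obtain S c where S: "S \<subseteq> X" "finite S" "S \<noteq> {}" and x: "x = (\<lambda>i. Max ((\<lambda>v. c v + v i) ` S))"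
    using assms unfolding tspan_def by blast
  have "(\<lambda>i. r + x i) = (\<lambda>i. Max ((\<lambda>v. (r + c v) + v i) ` S))"
  proof
    fix i
    have m: "Max ((\<lambda>v. c v + v i + r) ` S) = Max ((\<lambda>v. c v + v i) ` S) + r"
      by (rule Max_add_commute[OF S(2,3)])
    have l: "(\<lambda>v. (r + c v) + v i) = (\<lambda>v. c v + v i + r)" by (rule ext) linarith
    have "r + x i = Max ((\<lambda>v. c v + v i) ` S) + r" using x by simp
    also have "\<dots> = Max ((\<lambda>v. c v + v i + r) ` S)" using m by simp
    also have "\<dots> = Max ((\<lambda>v. (r + c v) + v i) ` S)"
      by (rule arg_cong[where f=Max], rule image_cong) auto
    finally show "r + x i = Max ((\<lambda>v. (r + c v) + v i) ` S)" .
  qed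
  then show ?thesis unfolding tspan_def
    apply (intro CollectI exI[of _ S] exI[of _ "\<lambda>v. r + c v"])
    using S by blast
qed

lemma tspan_max:
  assumes "x \<in> tspan X" "y \<in> tspan X" shows "(\<lambda>i. max (x i) (y i)) \<in> tspan X"
proof -
  obtain S1 c1 where S1: "S1 \<subseteq> X" "finite S1" "S1 \<noteq> {}" and x: "x = (\<lambda>i. Max ((\<lambda>v. c1 v + v i) ` S1))"
    using assms(1) unfolding tspan_def by blast
  obtain S2 c2 where S2: "S2 \<subseteq> X" "finite S2" "S2 \<noteq> {}" and y: "y = (\<lambda>i. Max ((\<lambda>v. c2 v + v i) ` S2))"
    using assms(2) unfolding tspan_def by blast
  define c where "c v = (if v \<in> S1 \<and> v \<in> S2 then max (c1 v) (c2 v) else if v \<in> S1 then c1 v else c2 v)" for v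
  have eqm: "(\<lambda>i. max (x i) (y i)) = (\<lambda>i. Max ((\<lambda>v. c v + v i) ` (S1 \<union> S2)))"
  proof
    fix i
    have A: "\<And>a. a \<in> S1 \<Longrightarrow> c1 a + a i \<le> c a + a i" by (auto simp: c_def)
    have B: "\<And>a. a \<in> S2 \<Longrightarrow> c2 a + a i \<le> c a + a i" by (auto simp: c_def)
    have C: "\<And>a. a \<in> S1 \<union> S2 \<Longrightarrow> (a \<in> S1 \<and> c a + a i \<le> c1 a + a i) \<or> (a \<in> S2 \<and> c a + a i \<le> c2 a + a i)"
      by (auto simp: c_def max_def)
    have fin: "finite (S1 \<union> S2)" "S1 \<union> S2 \<noteq> {}" using S1 S2 by auto
    have x1: "\<And>a. a \<in> S1 \<Longrightarrow> c1 a + a i \<le> x i" unfolding x using S1 by simp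
    have y1: "\<And>a. a \<in> S2 \<Longrightarrow> c2 a + a i \<le> y i" unfolding y using S2 by simp
    have "Max ((\<lambda>v. c1 v + v i) ` S1) \<in> (\<lambda>v. c1 v + v i) ` S1" by (rule Max_in) (use S1 in auto)
    then have x2: "\<exists>a\<in>S1. x i = c1 a + a i" unfolding x by auto
    have "Max ((\<lambda>v. c2 v + v i) ` S2) \<in> (\<lambda>v. c2 v + v i) ` S2" by (rule Max_in) (use S2 in auto)
    then have y2: "\<exists>a\<in>S2. y i = c2 a + a i" unfolding y by auto
    have m1: "\<And>a. a \<in> S1 \<union> S2 \<Longrightarrow> c a + a i \<le> Max ((\<lambda>v. c v + v i) ` (S1 \<union> S2))"
      using fin by simp
    have "Max ((\<lambda>v. c v + v i) ` (S1 \<union> S2)) \<in> (\<lambda>v. c v + v i) ` (S1 \<union> S2)" by (rule Max_in) (use fin in auto)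
    then obtain a where a: "a \<in> S1 \<union> S2" "Max ((\<lambda>v. c v + v i) ` (S1 \<union> S2)) = c a + a i"
      by auto
    show "max (x i) (y i) = Max ((\<lambda>v. c v + v i) ` (S1 \<union> S2))"
    proof (rule order_antisym)
      show "max (x i) (y i) \<le> Max ((\<lambda>v. c v + v i) ` (S1 \<union> S2))"
      proof -
        obtain a1 where a1: "a1 \<in> S1" "x i = c1 a1 + a1 i" using x2 by blast
        obtain a2 where a2: "a2 \<in> S2" "y i = c2 a2 + a2 i" using y2 by blast
        have "x i \<le> Max ((\<lambda>v. c v + v i) ` (S1 \<union> S2))" using a1 A[of a1] m1[of a1] by simp
        moreover have "y i \<le> Max ((\<lambda>v. c v + v i) ` (S1 \<union> S2))" using a2 B[of a2] m1[of a2] by simp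
        ultimately show ?thesis by simp
      qed
      show "Max ((\<lambda>v. c v + v i) ` (S1 \<union> S2)) \<le> max (x i) (y i)"
        using a C[of a] x1[of a] y1[of a] by auto
    qed
  qed
  have U: "S1 \<union> S2 \<subseteq> X" "finite (S1 \<union> S2)" "S1 \<union> S2 \<noteq> {}" using S1 S2 by auto
  show ?thesis unfolding tspan_def
    apply (rule CollectI)
    apply (rule exI[of _ "S1 \<union> S2"], rule exI[of _ c])
    by (intro conjI U eqm)
qed

lemma tspan_sub: "X \<subseteq> tspan X"
proof
  fix x assume "x \<in> X"
  then show "x \<in> tspan X" unfolding tspan_def
    by (intro CollectI exI[of _ "{x}"] exI[of _ "\<lambda>_. 0"]) auto
qed

lemma closed_Max:
  fixes C :: "('n::finite \<Rightarrow> real) set"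
  assumes sh: "\<And>x r. x \<in> C \<Longrightarrow> (\<lambda>i. r + x i) \<in> C"
    and mx: "\<And>x y. x \<in> C \<Longrightarrow> y \<in> C \<Longrightarrow> (\<lambda>i. max (x i) (y i)) \<in> C"
    and M: "finite M" "M \<noteq> {}" and w: "\<And>m. m \<in> M \<Longrightarrow> w m \<in> C"
  shows "(\<lambda>i. Max ((\<lambda>m. f m + w m i) ` M)) \<in> C"
  using M w
proof (induction M rule: finite_ne_induct)
  case (singleton x)
  then show ?case using sh by simp
next
  case (insert x F)
  have e: "(\<lambda>i. Max ((\<lambda>m. f m + w m i) ` insert x F)) = (\<lambda>i. max (f x + w x i) (Max ((\<lambda>m. f m + w m i) ` F)))"
    using insert by simp
  have c1: "(\<lambda>i. f x + w x i) \<in> C" using sh insert.prems by simp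
  have c2: "(\<lambda>i. Max ((\<lambda>m. f m + w m i) ` F)) \<in> C" using insert.IH insert.prems by simp
  show ?case unfolding e by (rule mx[OF c1 c2])
qed

lemma tspan_closed:
  fixes C :: "('n::finite \<Rightarrow> real) set"
  assumes sh: "\<And>x r. x \<in> C \<Longrightarrow> (\<lambda>i. r + x i) \<in> C"
    and mx: "\<And>x y. x \<in> C \<Longrightarrow> y \<in> C \<Longrightarrow> (\<lambda>i. max (x i) (y i)) \<in> C"
    and Y: "Y \<subseteq> C"
  shows "tspan Y \<subseteq> C"
proof
  fix x assume "x \<in> tspan Y"
  then obtain S c where S: "S \<subseteq> Y" "finite S" "S \<noteq> {}" and x: "x = (\<lambda>i. Max ((\<lambda>v. c v + v i) ` S))"
    unfolding tspan_def by blast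
  have "(\<lambda>i. Max ((\<lambda>m. c m + (\<lambda>v. v) m i) ` S)) \<in> C"
    apply (rule closed_Max[OF sh mx S(2,3)]) using S(1) Y by auto
  then show "x \<in> C" unfolding x by simp
qed

lemma KL:
  fixes E :: "('n::finite) tmat"
  assumes rk: "trank E = card (UNIV :: 'n set)"
    and jM: "j \<notin> M" and M: "M \<noteq> {}"
    and eq: "\<And>i. rv E i j = Max ((\<lambda>m. f m + rv E i m) ` M)"
  shows False
proof -
  define col where "col k = (\<lambda>i. real_of_ereal (E i k))" for k
  have cs: "colspace E = tspan (col ` UNIV)" unfolding colspace_def col_def by simp
  define X where "X = col ` (UNIV - {j})"
  define Y where "Y = tspan X"
  have shY: "\<And>x r. x \<in> Y \<Longrightarrow> (\<lambda>i. r + x i) \<in> Y" unfolding Y_def by (rule tspan_shift)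
  have mxY: "\<And>x y. x \<in> Y \<Longrightarrow> y \<in> Y \<Longrightarrow> (\<lambda>i. max (x i) (y i)) \<in> Y" unfolding Y_def by (rule tspan_max)
  have XY: "X \<subseteq> Y" unfolding Y_def by (rule tspan_sub)
  have colj: "col j = (\<lambda>i. Max ((\<lambda>m. f m + col m i) ` M))"
    using eq unfolding col_def rv_def by auto
  have "col j \<in> Y" unfolding colj
  proof (rule closed_Max[OF shY mxY])
    show "finite M" by simp
    show "M \<noteq> {}" by (rule M)
    fix m assume "m \<in> M"
    then have "m \<in> UNIV - {j}" using jM by auto
    then show "col m \<in> Y" using XY unfolding X_def by blast
  qed
  then have "col ` UNIV \<subseteq> Y" using XY unfolding X_def by auto
  then have "colspace E \<subseteq> Y" unfolding cs using tspan_closed[OF shY mxY] by blast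
  moreover have "Y \<subseteq> colspace E" unfolding Y_def cs
  proof (rule tspan_closed[OF tspan_shift tspan_max])
    show "X \<subseteq> tspan (range col)" using tspan_sub unfolding X_def by blast
  qed
  ultimately have eqY: "tspan X = colspace E" unfolding Y_def by blast
  have Xsub: "X \<subseteq> colspace E" using XY eqY unfolding Y_def by blast
  have "trank E \<le> card X" unfolding trank_def
    by (rule Least_le) (use eqY Xsub in \<open>auto simp: X_def\<close>)
  also have "\<dots> \<le> card (UNIV - {j})" unfolding X_def by (rule card_image_le) simp
  also have "\<dots> = card (UNIV :: 'n set) - 1" by (simp add: card_Diff_singleton)
  finally have le: "trank E \<le> card (UNIV :: 'n set) - 1" .
  have pos: "0 < card (UNIV :: 'n set)" by (simp add: card_gt_0_iff)
  show False using le rk pos by arith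
qed




locale fr =
  fixes E :: "('n::finite) tmat"
  assumes FT: "is_FT E" and idem: "tmult E E = E" and rk: "trank E = card (UNIV :: 'n set)"
begin

lemma le: "rv E i k + rv E k j \<le> rv E i j"
  using mult_real_le[OF FT FT, of i k j] idem by simp

lemma ex: "\<exists>k. rv E i j = rv E i k + rv E k j"
  using mult_real_ex[OF FT FT, of i j] idem by simp

lemma diag: "rv E j j = 0"
proof (rule ccontr)
  assume ne: "rv E j j \<noteq> 0"
  have "rv E j j \<le> 0" using le[of j j j] by simp
  with ne have neg: "rv E j j < 0" by simp
  define M where "M = UNIV - {j}"
  have kk: "\<And>i. \<exists>k\<in>M. rv E i j = rv E i k + rv E k j"
  proof -
    fix i
    obtain k where k: "rv E i j = rv E i k + rv E k j" using ex by blast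
    have "k \<noteq> j" using k neg by auto
    then show "\<exists>k\<in>M. rv E i j = rv E i k + rv E k j" using k unfolding M_def by blast
  qed
  have jM: "j \<notin> M" unfolding M_def by simp
  have Mne: "M \<noteq> {}" using kk[of j] by blast
  have finM: "finite M" by simp
  show False
  proof (rule KL[OF rk jM Mne])
    fix i
    show "rv E i j = Max ((\<lambda>m. rv E m j + rv E i m) ` M)"
    proof (rule order_antisym)
      obtain k where k: "k \<in> M" "rv E i j = rv E i k + rv E k j" using kk by blast
      have "rv E k j + rv E i k \<le> Max ((\<lambda>m. rv E m j + rv E i m) ` M)"
        by (rule Max_ge) (use k(1) finM in auto)
      then show "rv E i j \<le> Max ((\<lambda>m. rv E m j + rv E i m) ` M)" using k(2) by linarith
      show "Max ((\<lambda>m. rv E m j + rv E i m) ` M) \<le> rv E i j"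
        using finM Mne le[of i _ j] by (auto simp: add.commute)
    qed
  qed
qed

lemma PL: "a \<noteq> b \<Longrightarrow> rv E a b + rv E b a < 0"
proof (rule ccontr)
  assume ab: "a \<noteq> b" and "\<not> rv E a b + rv E b a < 0"
  moreover have "rv E a b + rv E b a \<le> 0" using le[of a b a] diag[of a] by simp
  ultimately have z: "rv E a b + rv E b a = 0" by simp
  show False
  proof (rule KL[OF rk, of b "{a}" "\<lambda>_. rv E a b"])
    show "b \<notin> {a}" using ab by simp
    show "{a} \<noteq> {}" by simp
    fix i
    have "rv E i a + rv E a b \<le> rv E i b" by (rule le)
    moreover have "rv E i b + rv E b a \<le> rv E i a" by (rule le)
    ultimately show "rv E i b = Max ((\<lambda>m. rv E a b + rv E i m) ` {a})" using z by simp
  qed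
qed

lemma E_eq: "E i j = ereal (rv E i j)" by (rule FT_eq[OF FT])

lemma E_diag: "E j j = 0" using E_eq[of j j] diag[of j] by (simp add: zero_ereal_def)

end




lemma prod_le: "is_FT X \<Longrightarrow> is_FT Y \<Longrightarrow> tmult X Y = Z \<Longrightarrow> rv X i k + rv Y k j \<le> rv Z i j"
  using mult_real_le by blast

lemma prod_ex: "is_FT X \<Longrightarrow> is_FT Y \<Longrightarrow> tmult X Y = Z \<Longrightarrow> \<exists>k. rv Z i j = rv X i k + rv Y k j"
  using mult_real_ex by blast

lemma R_sub:
  assumes A: "A \<in> right_ideal_FT E" shows "right_ideal_FT A \<subseteq> right_ideal_FT E"
proof
  fix x assume x: "x \<in> right_ideal_FT A"
  show "x \<in> right_ideal_FT E"
  proof (cases "x = A")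
    case True then show ?thesis using A by simp
  next
    case False
    then obtain Z where Z: "is_FT Z" "x = tmult A Z" using x unfolding right_ideal_FT_def by auto
    show ?thesis
    proof (cases "A = E")
      case True then show ?thesis using Z unfolding right_ideal_FT_def by auto
    next
      case False
      then obtain Y where Y: "is_FT Y" "A = tmult E Y" using A unfolding right_ideal_FT_def by auto
      have "x = tmult E (tmult Y Z)" using Y Z by (simp add: tmult_assoc)
      moreover have "is_FT (tmult Y Z)" using Y Z FT_mult by blast
      ultimately show ?thesis unfolding right_ideal_FT_def by blast
    qed
  qed
qed

lemma L_sub:
  assumes A: "A \<in> left_ideal_FT E" shows "left_ideal_FT A \<subseteq> left_ideal_FT E"
proof
  fix x assume x: "x \<in> left_ideal_FT A"
  show "x \<in> left_ideal_FT E"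
  proof (cases "x = A")
    case True then show ?thesis using A by simp
  next
    case False
    then obtain Z where Z: "is_FT Z" "x = tmult Z A" using x unfolding left_ideal_FT_def by auto
    show ?thesis
    proof (cases "A = E")
      case True then show ?thesis using Z unfolding left_ideal_FT_def by auto
    next
      case False
      then obtain Y where Y: "is_FT Y" "A = tmult Y E" using A unfolding left_ideal_FT_def by auto
      have "x = tmult (tmult Z Y) E" using Y Z by (simp add: tmult_assoc)
      moreover have "is_FT (tmult Z Y)" using Y Z FT_mult by blast
      ultimately show ?thesis unfolding left_ideal_FT_def by blast
    qed
  qed
qed

context fr begin

lemma le_E:
  assumes "tmult K E = E" shows "K i j \<le> E i j"
proof -
  have "K i j + E j j \<le> tmult K E i j" unfolding tmult_def by (rule Max_range_ge)
  then show ?thesis using assms E_diag by simp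
qed

lemma K_diag:
  assumes TK: "is_T K" and TL: "is_T L" and KL: "tmult K L = tid"
    and KE: "tmult K E = E" and LE: "tmult L E = E"
  shows "K i i = 0"
proof -
  have "tmult K L i i = 0" using KL by (simp add: tid_def)
  then have "Max (range (\<lambda>m. K i m + L m i)) = 0" unfolding tmult_def .
  moreover obtain m where "Max (range (\<lambda>m. K i m + L m i)) = K i m + L m i"
    using Max_range_in by blast
  ultimately have s: "K i m + L m i = 0" by simp
  have "m = i"
  proof (rule ccontr)
    assume "m \<noteq> i"
    then have neg: "rv E i m + rv E m i < 0" using PL[of i m] by auto
    have "K i m + L m i \<le> E i m + E m i" by (rule add_mono[OF le_E[OF KE] le_E[OF LE]])
    also have "\<dots> = ereal (rv E i m + rv E m i)" using E_eq[of i m] E_eq[of m i] by (metis plus_ereal.simps(1))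
    finally have "0 \<le> ereal (rv E i m + rv E m i)" using s by simp
    then show False using neg by simp
  qed
  then have s2: "K i i + L i i = 0" using s by simp
  have k0: "K i i \<le> 0" using le_E[OF KE, of i i] E_diag by simp
  have l0: "L i i \<le> 0" using le_E[OF LE, of i i] E_diag by simp
  show ?thesis using s2 k0 l0 TK TL unfolding is_T_def
    by (cases "K i i"; cases "L i i") auto
qed

lemma K_tid:
  assumes TK: "is_T K" and TL: "is_T L" and KL: "tmult K L = tid" and LK: "tmult L K = tid"
    and KE: "tmult K E = E" and LE: "tmult L E = E"
  shows "K = tid"
proof (intro ext)
  fix i j
  show "K i j = tid i j"
  proof (cases "i = j")
    case True
    then show ?thesis using K_diag[OF TK TL KL KE LE] by (simp add: tid_def)
  next
    case False
    have "K i j + L j j \<le> tmult K L i j" unfolding tmult_def by (rule Max_range_ge)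
    then have "K i j + L j j \<le> -\<infinity>" using KL False by (simp add: tid_def)
    moreover have "L j j = 0" using K_diag[OF TL TK LK LE KE] .
    ultimately show ?thesis using False by (simp add: tid_def)
  qed
qed

end




context fr begin

lemma surj_H:
  assumes A: "A \<in> H_class_FT E"
  shows "\<exists>G \<in> G_of E. A = tmult G E"
proof -
  have FA: "is_FT A" and RA: "right_ideal_FT A = right_ideal_FT E"
    and LA: "left_ideal_FT A = left_ideal_FT E"
    using A unfolding H_class_FT_def H_FT_def by auto
  have AinR: "A \<in> right_ideal_FT E" using RA unfolding right_ideal_FT_def by blast
  have AinL: "A \<in> left_ideal_FT E" using LA unfolding left_ideal_FT_def by blast
  have EinR: "E \<in> right_ideal_FT A" using RA unfolding right_ideal_FT_def by blast
  have EinL: "E \<in> left_ideal_FT A" using LA unfolding left_ideal_FT_def by blast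
  have EA: "tmult E A = A"
  proof (cases "A = E")
    case True then show ?thesis using idem by simp
  next
    case False
    then obtain X where "A = tmult E X" using AinR unfolding right_ideal_FT_def by auto
    then show ?thesis using idem by (metis tmult_assoc)
  qed
  have AE: "tmult A E = A"
  proof (cases "A = E")
    case True then show ?thesis using idem by simp
  next
    case False
    then obtain X where "A = tmult X E" using AinL unfolding left_ideal_FT_def by auto
    then show ?thesis using idem by (metis tmult_assoc)
  qed
  obtain U where FU: "is_FT U" and AU: "tmult A U = E"
  proof (cases "E = A")
    case True then show ?thesis using that[of E] FT idem by simp
  next
    case False
    then obtain X where "is_FT X" "E = tmult A X" using EinR unfolding right_ideal_FT_def by auto
    then show ?thesis using that by simp
  qed
  obtain V where FV: "is_FT V" and VA: "tmult V A = E"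
  proof (cases "E = A")
    case True then show ?thesis using that[of E] FT idem by simp
  next
    case False
    then obtain X where "is_FT X" "E = tmult X A" using EinL unfolding left_ideal_FT_def by auto
    then show ?thesis using that by simp
  qed
  define A' where "A' = tmult V E"
  have FA': "is_FT A'" unfolding A'_def by (rule FT_mult[OF FV FT])
  have A'A: "tmult A' A = E" unfolding A'_def by (simp add: tmult_assoc EA VA)
  have AA': "tmult A A' = E"
  proof -
    have "tmult A A' = tmult A (tmult V (tmult A U))" unfolding A'_def using AU by simp
    also have "\<dots> = tmult A (tmult (tmult V A) U)" by (simp add: tmult_assoc)
    also have "\<dots> = tmult (tmult A E) U" using VA by (simp add: tmult_assoc)
    also have "\<dots> = E" using AE AU by simp
    finally show ?thesis .
  qed
  define a where "a = rv A"
  define a' where "a' = rv A'"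
  define e where "e = rv E"
  have P1: "\<And>i k m. a i k + a' k m \<le> e i m" unfolding a_def a'_def e_def by (rule prod_le[OF FA FA' AA'])
  have P2: "\<And>i k m. a' i k + a k m \<le> e i m" unfolding a_def a'_def e_def by (rule prod_le[OF FA' FA A'A])
  have P3: "\<And>i k m. a i k + e k m \<le> a i m" unfolding a_def e_def by (rule prod_le[OF FA FT AE])
  have P4: "\<And>i k m. e i k + a k m \<le> a i m" unfolding a_def e_def by (rule prod_le[OF FT FA EA])
  have X1: "\<And>i m. \<exists>k. e i m = a i k + a' k m" unfolding a_def a'_def e_def by (rule prod_ex[OF FA FA' AA'])
  have ed: "\<And>i. e i i = 0" unfolding e_def by (rule diag)
  have "\<forall>i. \<exists>k. a i k + a' k i = 0" using X1 ed by metis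
  then obtain \<sigma> where sig: "\<And>i. a i (\<sigma> i) + a' (\<sigma> i) i = 0" by metis
  have rows: "\<And>i m. a i m = a i (\<sigma> i) + e (\<sigma> i) m"
  proof -
    fix i m
    show "a i m = a i (\<sigma> i) + e (\<sigma> i) m"
      using P3[of i "\<sigma> i" m] P2[of "\<sigma> i" i m] sig[of i] by linarith
  qed
  have key: "\<And>i l. a i (\<sigma> l) = e i l + a l (\<sigma> l)"
  proof -
    fix i l
    show "a i (\<sigma> l) = e i l + a l (\<sigma> l)"
      using P4[of i l "\<sigma> l"] P1[of i "\<sigma> l" l] sig[of l] by linarith
  qed
  have inj: "inj \<sigma>"
  proof (rule injI)
    fix i l assume eq: "\<sigma> i = \<sigma> l"
    show "i = l"
    proof (rule ccontr)
      assume ne: "i \<noteq> l"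
      have "a i (\<sigma> i) = e i l + a l (\<sigma> l)" using key[of i l] eq by simp
      moreover have "a l (\<sigma> l) = e l i + a i (\<sigma> i)" using key[of l i] eq by simp
      ultimately have "e i l + e l i = 0" by linarith
      then show False using PL[OF ne] unfolding e_def by simp
    qed
  qed
  have surj: "surj \<sigma>" using finite_UNIV_inj_surj[OF _ inj] by simp
  have sinv: "\<And>t. \<sigma> (inv_into UNIV \<sigma> t) = t" using surj by (simp add: surj_f_inv_f)
  have invs: "\<And>m t. \<sigma> m = t \<longleftrightarrow> m = inv_into UNIV \<sigma> t" using inj sinv by (metis inv_f_f)
  define kk where "kk i = a i (\<sigma> i)" for i
  define G where "G i s = (if s = \<sigma> i then ereal (kk i) else -\<infinity>)" for i s
  define B where "B s i = (if \<sigma> i = s then ereal (- kk i) else -\<infinity>)" for s i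
  have TG: "is_T G" unfolding is_T_def G_def by simp
  have TB: "is_T B" unfolding is_T_def B_def by simp
  have TE: "is_T E" by (rule FT_T[OF FT])
  have GB: "tmult G B = tid"
  proof (intro ext)
    fix i j
    have "tmult G B i j = G i (\<sigma> i) + B (\<sigma> i) j"
      unfolding tmult_def
    proof (rule Max_single)
      fix m assume "m \<noteq> \<sigma> i"
      then show "G i m + B m j = -\<infinity>" unfolding G_def using minf_add TB unfolding is_T_def by simp
    qed
    also have "\<dots> = tid i j"
      using inj unfolding G_def B_def tid_def by (auto simp: inj_eq zero_ereal_def)
    finally show "tmult G B i j = tid i j" .
  qed
  have BG: "tmult B G = tid"
  proof (intro ext)
    fix s t
    have "tmult B G s t = B s (inv_into UNIV \<sigma> s) + G (inv_into UNIV \<sigma> s) t"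
      unfolding tmult_def
    proof (rule Max_single)
      fix m assume "m \<noteq> inv_into UNIV \<sigma> s"
      then have "\<sigma> m \<noteq> s" using invs by blast
      then show "B s m + G m t = -\<infinity>" unfolding B_def using minf_add TG unfolding is_T_def by simp
    qed
    also have "\<dots> = tid s t"
      using sinv[of s] unfolding G_def B_def tid_def by (auto simp: zero_ereal_def)
    finally show "tmult B G s t = tid s t" .
  qed
  have GE: "tmult G E = A"
  proof (intro ext)
    fix i m
    have "tmult G E i m = G i (\<sigma> i) + E (\<sigma> i) m"
      unfolding tmult_def
    proof (rule Max_single)
      fix l assume "l \<noteq> \<sigma> i"
      then show "G i l + E l m = -\<infinity>" unfolding G_def using minf_add TE unfolding is_T_def by simp
    qed
    also have "\<dots> = ereal (a i (\<sigma> i) + e (\<sigma> i) m)"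
      unfolding G_def kk_def e_def using E_eq[of "\<sigma> i" m] by simp
    also have "\<dots> = A i m" using rows[of i m] FT_eq[OF FA, of i m] unfolding a_def by simp
    finally show "tmult G E i m = A i m" .
  qed
  have EG: "tmult E G = A"
  proof (intro ext)
    fix i t
    have "tmult E G i t = E i (inv_into UNIV \<sigma> t) + G (inv_into UNIV \<sigma> t) t"
      unfolding tmult_def
    proof (rule Max_single)
      fix m assume "m \<noteq> inv_into UNIV \<sigma> t"
      then have "\<sigma> m \<noteq> t" using invs by blast
      then show "E i m + G m t = -\<infinity>" unfolding G_def using add_minf TE unfolding is_T_def by simp
    qed
    also have "\<dots> = ereal (e i (inv_into UNIV \<sigma> t) + a (inv_into UNIV \<sigma> t) (\<sigma> (inv_into UNIV \<sigma> t)))"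
      unfolding G_def kk_def e_def using E_eq[of i "inv_into UNIV \<sigma> t"] sinv[of t] by simp
    also have "\<dots> = ereal (a i t)" using key[of i "inv_into UNIV \<sigma> t"] sinv[of t] by simp
    also have "\<dots> = A i t" using FT_eq[OF FA, of i t] unfolding a_def by simp
    finally show "tmult E G i t = A i t" .
  qed
  have "G \<in> G_of E" unfolding G_of_def is_unit_T_def using TG TB GB BG GE EG by auto
  then show ?thesis using GE by auto
qed

end




context fr begin

lemma unitG:
  assumes "G \<in> G_of E"
  obtains B where "is_T G" "is_T B" "tmult G B = tid" "tmult B G = tid" "tmult G E = tmult E G"
  using assms unfolding G_of_def is_unit_T_def by auto

lemma inv_in:
  assumes G: "G \<in> G_of E" and TB: "is_T B" and GB: "tmult G B = tid" and BG: "tmult B G = tid"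
  shows "B \<in> G_of E"
proof -
  have TG: "is_T G" and C: "tmult G E = tmult E G" using G unitG by blast+
  have TE: "is_T E" by (rule FT_T[OF FT])
  have "tmult B E = tmult (tmult B E) (tmult G B)" using GB tid_right[OF T_mult[OF TB TE]] by simp
  also have "\<dots> = tmult B (tmult (tmult E G) B)" by (simp add: tmult_assoc)
  also have "\<dots> = tmult B (tmult (tmult G E) B)" using C by simp
  also have "\<dots> = tmult (tmult B G) (tmult E B)" by (simp add: tmult_assoc)
  also have "\<dots> = tmult E B" using BG tid_left T_mult[OF TE TB] by simp
  finally have "tmult B E = tmult E B" .
  then show ?thesis unfolding G_of_def is_unit_T_def using TB TG GB BG by auto
qed

lemma mult_in:
  assumes G1: "G1 \<in> G_of E" and G2: "G2 \<in> G_of E"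
  shows "tmult G1 G2 \<in> G_of E"
proof -
  obtain B1 where b1: "is_T G1" "is_T B1" "tmult G1 B1 = tid" "tmult B1 G1 = tid" "tmult G1 E = tmult E G1"
    using unitG[OF G1] by blast
  obtain B2 where b2: "is_T G2" "is_T B2" "tmult G2 B2 = tid" "tmult B2 G2 = tid" "tmult G2 E = tmult E G2"
    using unitG[OF G2] by blast
  have "tmult (tmult G1 G2) (tmult B2 B1) = tid"
  proof -
    have "tmult (tmult G1 G2) (tmult B2 B1) = tmult G1 (tmult (tmult G2 B2) B1)" by (simp add: tmult_assoc)
    also have "\<dots> = tid" using b1(3) b2(3) tid_left[OF b1(2)] by simp
    finally show ?thesis .
  qed
  moreover have "tmult (tmult B2 B1) (tmult G1 G2) = tid"
  proof -
    have "tmult (tmult B2 B1) (tmult G1 G2) = tmult B2 (tmult (tmult B1 G1) G2)" by (simp add: tmult_assoc)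
    also have "\<dots> = tid" using b1(4) b2(4) tid_left[OF b2(1)] by simp
    finally show ?thesis .
  qed
  moreover have "tmult (tmult G1 G2) E = tmult E (tmult G1 G2)"
  proof -
    have "tmult (tmult G1 G2) E = tmult G1 (tmult G2 E)" by (simp add: tmult_assoc)
    also have "\<dots> = tmult (tmult G1 E) G2" using b2 by (simp add: tmult_assoc)
    also have "\<dots> = tmult E (tmult G1 G2)" using b1 by (simp add: tmult_assoc)
    finally show ?thesis .
  qed
  ultimately show ?thesis unfolding G_of_def is_unit_T_def
    using T_mult[OF b1(1) b2(1)] T_mult[OF b2(2) b1(2)] by auto
qed

lemma tid_in: "tid \<in> G_of E"
proof -
  have TE: "is_T E" by (rule FT_T[OF FT])
  show ?thesis unfolding G_of_def is_unit_T_def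
    using is_T_tid tid_left[OF is_T_tid] tid_left[OF TE] tid_right[OF TE] by auto
qed

lemma phi_in:
  assumes G: "G \<in> G_of E" shows "tmult G E \<in> H_class_FT E"
proof -
  obtain B where b: "is_T G" "is_T B" "tmult G B = tid" "tmult B G = tid" "tmult G E = tmult E G"
    using unitG[OF G] by blast
  have BG: "B \<in> G_of E" by (rule inv_in[OF G b(2-4)])
  then have cB: "tmult B E = tmult E B" using unitG by blast
  have TE: "is_T E" by (rule FT_T[OF FT])
  have FGE: "is_FT (tmult G E)" by (rule unit_FT_left[OF b(1-3) FT])
  have FBE: "is_FT (tmult B E)" by (rule unit_FT_left[OF b(2,1,4) FT])
  have FEG: "is_FT (tmult E G)" using FGE b(5) by simp
  have FEB: "is_FT (tmult E B)" using FBE cB by simp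
  have r1: "tmult G E \<in> right_ideal_FT E"
  proof -
    have "tmult G E = tmult E (tmult E G)" using b(5) idem by (simp add: tmult_assoc[symmetric])
    then show ?thesis unfolding right_ideal_FT_def using FEG by blast
  qed
  have r2: "E \<in> right_ideal_FT (tmult G E)"
  proof -
    have "tmult (tmult G E) (tmult E B) = tmult G (tmult (tmult E E) B)" by (simp add: tmult_assoc)
    also have "\<dots> = tmult G (tmult B E)" using idem cB by simp
    also have "\<dots> = tmult (tmult G B) E" by (simp add: tmult_assoc)
    also have "\<dots> = E" using b(3) tid_left[OF TE] by simp
    finally show ?thesis unfolding right_ideal_FT_def using FEB by force
  qed
  have l1: "tmult G E \<in> left_ideal_FT E"
  proof -
    have "tmult G E = tmult (tmult G E) E" using idem by (simp add: tmult_assoc)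
    then show ?thesis unfolding left_ideal_FT_def using FGE by blast
  qed
  have l2: "E \<in> left_ideal_FT (tmult G E)"
  proof -
    have "tmult (tmult E B) (tmult G E) = tmult E (tmult (tmult B G) E)" by (simp add: tmult_assoc)
    also have "\<dots> = E" using b(4) tid_left[OF TE] idem by simp
    finally show ?thesis unfolding left_ideal_FT_def using FEB by force
  qed
  have "right_ideal_FT (tmult G E) = right_ideal_FT E"
    using R_sub[OF r1] R_sub[OF r2] by blast
  moreover have "left_ideal_FT (tmult G E) = left_ideal_FT E"
    using L_sub[OF l1] L_sub[OF l2] by blast
  ultimately show ?thesis unfolding H_class_FT_def H_FT_def using FGE by blast
qed

lemma phi_hom:
  assumes G2: "G2 \<in> G_of E"
  shows "tmult (tmult G1 G2) E = tmult (tmult G1 E) (tmult G2 E)"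
proof -
  have c: "tmult G2 E = tmult E G2" using unitG[OF G2] by blast
  have "tmult (tmult G1 E) (tmult G2 E) = tmult G1 (tmult (tmult E G2) E)" by (simp add: tmult_assoc)
  also have "\<dots> = tmult G1 (tmult G2 (tmult E E))" using c by (metis tmult_assoc)
  also have "\<dots> = tmult (tmult G1 G2) E" using idem by (simp add: tmult_assoc)
  finally show ?thesis by simp
qed

lemma phi_inj: "inj_on (\<lambda>G. tmult G E) (G_of E)"
proof (rule inj_onI)
  fix G1 G2 assume G1: "G1 \<in> G_of E" and G2: "G2 \<in> G_of E" and eq: "tmult G1 E = tmult G2 E"
  obtain B1 where b1: "is_T G1" "is_T B1" "tmult G1 B1 = tid" "tmult B1 G1 = tid" "tmult G1 E = tmult E G1"
    using unitG[OF G1] by blast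
  obtain B2 where b2: "is_T G2" "is_T B2" "tmult G2 B2 = tid" "tmult B2 G2 = tid" "tmult G2 E = tmult E G2"
    using unitG[OF G2] by blast
  have TE: "is_T E" by (rule FT_T[OF FT])
  define K where "K = tmult B1 G2"
  define L where "L = tmult B2 G1"
  have TK: "is_T K" unfolding K_def by (rule T_mult[OF b1(2) b2(1)])
  have TL: "is_T L" unfolding L_def by (rule T_mult[OF b2(2) b1(1)])
  have KL: "tmult K L = tid"
  proof -
    have "tmult K L = tmult B1 (tmult (tmult G2 B2) G1)" unfolding K_def L_def by (simp add: tmult_assoc)
    also have "\<dots> = tid" using b1(4) b2(3) tid_left[OF b1(1)] by simp
    finally show ?thesis .
  qed
  have LK: "tmult L K = tid"
  proof -
    have "tmult L K = tmult B2 (tmult (tmult G1 B1) G2)" unfolding K_def L_def by (simp add: tmult_assoc)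
    also have "\<dots> = tid" using b1(3) b2(4) tid_left[OF b2(1)] by simp
    finally show ?thesis .
  qed
  have KE: "tmult K E = E"
  proof -
    have "tmult K E = tmult B1 (tmult G2 E)" unfolding K_def by (simp add: tmult_assoc)
    also have "\<dots> = tmult (tmult B1 G1) E" using eq by (simp add: tmult_assoc)
    also have "\<dots> = E" using b1 tid_left[OF TE] by simp
    finally show ?thesis .
  qed
  have LE: "tmult L E = E"
  proof -
    have "tmult L E = tmult B2 (tmult G1 E)" unfolding L_def by (simp add: tmult_assoc)
    also have "\<dots> = tmult (tmult B2 G2) E" using eq by (simp add: tmult_assoc)
    also have "\<dots> = E" using b2 tid_left[OF TE] by simp
    finally show ?thesis .
  qed
  have "K = tid" by (rule K_tid[OF TK TL KL LK KE LE])
  then have "tmult G1 (tmult B1 G2) = G1" unfolding K_def using tid_right[OF b1(1)] by simp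
  then show "G1 = G2" using b1(3) tid_left[OF b2(1)] by (simp add: tmult_assoc[symmetric])
qed

lemma phi_image: "(\<lambda>G. tmult G E) ` G_of E = H_class_FT E"
  using phi_in surj_H by blast

lemma main:
  "group (G_group E) \<and> group (H_group E) \<and>
   (\<forall>G \<in> G_of E. tmult G E = tmult E G) \<and>
   (\<lambda>G. tmult G E) \<in> iso (G_group E) (H_group E)"
proof (intro conjI)
  show gG: "group (G_group E)"
  proof (rule groupI)
    show "\<And>x y. x \<in> carrier (G_group E) \<Longrightarrow> y \<in> carrier (G_group E) \<Longrightarrow> x \<otimes>\<^bsub>G_group E\<^esub> y \<in> carrier (G_group E)"
      unfolding G_group_def using mult_in by simp
    show "\<one>\<^bsub>G_group E\<^esub> \<in> carrier (G_group E)" unfolding G_group_def using tid_in by simp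
    show "\<And>x y z. x \<in> carrier (G_group E) \<Longrightarrow> y \<in> carrier (G_group E) \<Longrightarrow> z \<in> carrier (G_group E) \<Longrightarrow>
      x \<otimes>\<^bsub>G_group E\<^esub> y \<otimes>\<^bsub>G_group E\<^esub> z = x \<otimes>\<^bsub>G_group E\<^esub> (y \<otimes>\<^bsub>G_group E\<^esub> z)"
      unfolding G_group_def by (simp add: tmult_assoc)
    show "\<And>x. x \<in> carrier (G_group E) \<Longrightarrow> \<one>\<^bsub>G_group E\<^esub> \<otimes>\<^bsub>G_group E\<^esub> x = x"
      unfolding G_group_def using unitG tid_left by (simp, blast)
    show "\<And>x. x \<in> carrier (G_group E) \<Longrightarrow> \<exists>y\<in>carrier (G_group E). y \<otimes>\<^bsub>G_group E\<^esub> x = \<one>\<^bsub>G_group E\<^esub>"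
    proof -
      fix x assume "x \<in> carrier (G_group E)"
      then have x: "x \<in> G_of E" unfolding G_group_def by simp
      obtain B where b: "is_T x" "is_T B" "tmult x B = tid" "tmult B x = tid" "tmult x E = tmult E x"
        using unitG[OF x] by blast
      have "B \<in> G_of E" by (rule inv_in[OF x b(2-4)])
      then show "\<exists>y\<in>carrier (G_group E). y \<otimes>\<^bsub>G_group E\<^esub> x = \<one>\<^bsub>G_group E\<^esub>"
        unfolding G_group_def using b(4) by auto
    qed
  qed
  show "group (H_group E)"
  proof (rule groupI)
    show "\<And>x y. x \<in> carrier (H_group E) \<Longrightarrow> y \<in> carrier (H_group E) \<Longrightarrow> x \<otimes>\<^bsub>H_group E\<^esub> y \<in> carrier (H_group E)"
    proof -
      fix x y assume "x \<in> carrier (H_group E)" "y \<in> carrier (H_group E)"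
      then have "x \<in> (\<lambda>G. tmult G E) ` G_of E" "y \<in> (\<lambda>G. tmult G E) ` G_of E"
        unfolding H_group_def using phi_image by simp_all
      then obtain G1 G2 where g: "G1 \<in> G_of E" "G2 \<in> G_of E" "x = tmult G1 E" "y = tmult G2 E"
        by blast
      have "tmult x y = tmult (tmult G1 G2) E" using g phi_hom by simp
      then show "x \<otimes>\<^bsub>H_group E\<^esub> y \<in> carrier (H_group E)"
        unfolding H_group_def using phi_in[OF mult_in[OF g(1,2)]] by simp
    qed
    show "\<one>\<^bsub>H_group E\<^esub> \<in> carrier (H_group E)"
      unfolding H_group_def using phi_in[OF tid_in] tid_left[OF FT_T[OF FT]] by simp
    show "\<And>x y z. x \<in> carrier (H_group E) \<Longrightarrow> y \<in> carrier (H_group E) \<Longrightarrow> z \<in> carrier (H_group E) \<Longrightarrow>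
      x \<otimes>\<^bsub>H_group E\<^esub> y \<otimes>\<^bsub>H_group E\<^esub> z = x \<otimes>\<^bsub>H_group E\<^esub> (y \<otimes>\<^bsub>H_group E\<^esub> z)"
      unfolding H_group_def by (simp add: tmult_assoc)
    show "\<And>x. x \<in> carrier (H_group E) \<Longrightarrow> \<one>\<^bsub>H_group E\<^esub> \<otimes>\<^bsub>H_group E\<^esub> x = x"
    proof -
      fix x assume "x \<in> carrier (H_group E)"
      then have "x \<in> (\<lambda>G. tmult G E) ` G_of E" unfolding H_group_def using phi_image by simp
      then obtain G where g: "G \<in> G_of E" "x = tmult G E" by blast
      have c: "tmult G E = tmult E G" using unitG[OF g(1)] by blast
      have "tmult E x = tmult (tmult E G) E" using g by (simp add: tmult_assoc)
      also have "\<dots> = tmult G (tmult E E)" using c by (metis tmult_assoc)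
      also have "\<dots> = x" using g idem by simp
      finally show "\<one>\<^bsub>H_group E\<^esub> \<otimes>\<^bsub>H_group E\<^esub> x = x" unfolding H_group_def by simp
    qed
    show "\<And>x. x \<in> carrier (H_group E) \<Longrightarrow> \<exists>y\<in>carrier (H_group E). y \<otimes>\<^bsub>H_group E\<^esub> x = \<one>\<^bsub>H_group E\<^esub>"
    proof -
      fix x assume "x \<in> carrier (H_group E)"
      then have "x \<in> (\<lambda>G. tmult G E) ` G_of E" unfolding H_group_def using phi_image by simp
      then obtain G where g: "G \<in> G_of E" "x = tmult G E" by blast
      obtain B where b: "is_T G" "is_T B" "tmult G B = tid" "tmult B G = tid" "tmult G E = tmult E G"
        using unitG[OF g(1)] by blast
      have BG: "B \<in> G_of E" by (rule inv_in[OF g(1) b(2-4)])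
      have "tmult (tmult B E) x = tmult (tmult B G) E" using g phi_hom[OF g(1), of B] by simp
      also have "\<dots> = E" using b(4) tid_left[OF FT_T[OF FT]] by simp
      finally have "tmult (tmult B E) x = E" .
      moreover have "tmult B E \<in> H_class_FT E" by (rule phi_in[OF BG])
      ultimately show "\<exists>y\<in>carrier (H_group E). y \<otimes>\<^bsub>H_group E\<^esub> x = \<one>\<^bsub>H_group E\<^esub>"
        unfolding H_group_def by auto
    qed
  qed
  show "\<forall>G \<in> G_of E. tmult G E = tmult E G" using unitG by blast
  show "(\<lambda>G. tmult G E) \<in> iso (G_group E) (H_group E)"
    unfolding iso_def hom_def bij_betw_def
    using phi_in phi_hom phi_inj phi_image unfolding G_group_def H_group_def by auto
qed

end

theorem theorem7p3:
  fixes E :: "('n::finite) tmat"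
  assumes "is_FT E" and "tmult E E = E" and "trank E = card (UNIV :: 'n set)"
  shows "group (G_group E) \<and> group (H_group E) \<and>
         (\<forall>G \<in> G_of E. tmult G E = tmult E G) \<and>
         (\<lambda>G. tmult G E) \<in> iso (G_group E) (H_group E)"
proof -
  interpret fr E using assms by unfold_locales
  show ?thesis by (rule main)
qed


end
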